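(* Let $m\ge1$, $n\ge1$, $N>2n$, let $\Sigma_0,\dots,\Sigma_n\in\mathbb R^{m\times m}$ and let $\mathbf T_n$ be the block-Toeplitz matrix whose $(i,j)$ block ($i,j=0,\dots,n$) is $\Sigma_{i-j}$ if $i\ge j$ and $\Sigma_{j-i}^\top$ if $i<j$. Let $(\Lambda_k,\Theta_k)$, $k\ge1$, be a bounded sequence in $\mathcal L_+$ such that $A(\Lambda_k,\Theta_k)$ converges to a singular matrix. Then $J(\Lambda_k,\Theta_k)\to\infty$, where $J(\Lambda,\Theta)=\operatorname{Tr}(\Lambda\mathbf T_n)-\log\det A(\Lambda,\Theta)$.
   Context: $\mathfrak S_k$ denotes the space of real symmetric $mk\times mk$ matrices. $E_n$ is the $mN\times m(n+1)$ matrix with $N\times(n+1)$ blocks of size $m\times m$ whose $(i,i)$ blocks ($i=1,\dots,n+1$) are $I_m$ and other blocks $0$. $\mathbf U_N$ is the $mN\times mN$ block shift matrix whose $(i,i+1)$ blocks ($i=1,\dots,N-1$) and $(N,1)$ block are $I_m$, others $0$. The linear map $A:\mathfrak S_{n+1}\times\mathfrak S_N\to\mathfrak S_N$ is $A(\Lambda,\Theta)=E_n\Lambda E_n^\top+\mathbf U_N\Theta\mathbf U_N^\top-\Theta$, and $\mathcal L_+=\{(\Lambda,\Theta)\in(\ker A)^\perp:A(\Lambda,\Theta)>0\}$, orthogonality being with respect to $\langle(\Lambda_1,\Theta_1),(\Lambda_2,\Theta_2)\rangle=\operatorname{Tr}(\Lambda_1\Lambda_2)+\operatorname{Tr}(\Theta_1\Theta_2)$.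 *)

theory Defs
  imports Complex_Main "Jordan_Normal_Form.Determinant"
begin

text \<open>Block (i,j) of size m x m of a matrix M consists of the entries M(r,c) with
  r div m = i, c div m = j (0-based indices).\<close>

definition mtrace :: "real mat \<Rightarrow> real" where
  "mtrace M = (\<Sum>i<dim_row M. M $$ (i, i))"

definition Sym :: "nat \<Rightarrow> nat \<Rightarrow> real mat set" where
  "Sym m k = {M. M \<in> carrier_mat (m*k) (m*k) \<and> transpose_mat M = M}"

definition Tmat :: "nat \<Rightarrow> nat \<Rightarrow> (nat \<Rightarrow> real mat) \<Rightarrow> real mat" where
  "Tmat m n Sig = mat (m*(n+1)) (m*(n+1)) (\<lambda>(r,c).
     (let i = r div m; j = c div m; a = r mod m; b = c mod m in
      if j \<le> i then Sig (i - j) $$ (a, b) else Sig (j - i) $$ (b, a)))"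

definition Emat :: "nat \<Rightarrow> nat \<Rightarrow> nat \<Rightarrow> real mat" where
  "Emat m n N = mat (m*N) (m*(n+1)) (\<lambda>(r,c).
     if r div m = c div m \<and> r mod m = c mod m then 1 else 0)"

text \<open>U_N: mN x mN block shift, blocks (i,i+1) for i = 1..N-1 (1-based) and (N,1) are identity.\<close>
definition Umat :: "nat \<Rightarrow> nat \<Rightarrow> real mat" where
  "Umat m N = mat (m*N) (m*N) (\<lambda>(r,c).
     if r mod m = c mod m \<and>
        ((r div m + 1 < N \<and> c div m = r div m + 1) \<or> (r div m + 1 = N \<and> c div m = 0))
     then 1 else 0)"

definition Aop :: "nat \<Rightarrow> nat \<Rightarrow> nat \<Rightarrow> real mat \<Rightarrow> real mat \<Rightarrow> real mat" where
  "Aop m n N Lam Th =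
     Emat m n N * Lam * transpose_mat (Emat m n N)
     + Umat m N * Th * transpose_mat (Umat m N) - Th"

definition pair_inner :: "real mat \<times> real mat \<Rightarrow> real mat \<times> real mat \<Rightarrow> real" where
  "pair_inner p q = mtrace (fst p * fst q) + mtrace (snd p * snd q)"

definition kerA :: "nat \<Rightarrow> nat \<Rightarrow> nat \<Rightarrow> (real mat \<times> real mat) set" where
  "kerA m n N = {(Lam, Th). Lam \<in> Sym m (n+1) \<and> Th \<in> Sym m N \<and>
                    Aop m n N Lam Th = 0\<^sub>m (m*N) (m*N)}"

definition kerA_perp :: "nat \<Rightarrow> nat \<Rightarrow> nat \<Rightarrow> (real mat \<times> real mat) set" where
  "kerA_perp m n N = {(Lam, Th). Lam \<in> Sym m (n+1) \<and> Th \<in> Sym m N \<and>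
                    (\<forall>q \<in> kerA m n N. pair_inner (Lam, Th) q = 0)}"

definition pos_def :: "real mat \<Rightarrow> bool" where
  "pos_def M \<longleftrightarrow> square_mat M \<and> transpose_mat M = M \<and>
     (\<forall>v \<in> carrier_vec (dim_row M). v \<noteq> 0\<^sub>v (dim_row M) \<longrightarrow> v \<bullet> (M *\<^sub>v v) > 0)"

definition Lplus :: "nat \<Rightarrow> nat \<Rightarrow> nat \<Rightarrow> (real mat \<times> real mat) set" where
  "Lplus m n N = {(Lam, Th). (Lam, Th) \<in> kerA_perp m n N \<and> pos_def (Aop m n N Lam Th)}"

definition Jfun :: "nat \<Rightarrow> nat \<Rightarrow> nat \<Rightarrow> (nat \<Rightarrow> real mat) \<Rightarrow> real mat \<Rightarrow> real mat \<Rightarrow> real" where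
  "Jfun m n N Sig Lam Th = mtrace (Lam * Tmat m n Sig) - ln (det (Aop m n N Lam Th))"

end

theory Submission imports Defs begin
lemma self_sp_pos:
  fixes v :: "real vec"
  assumes "v \<in> carrier_vec n" "v \<noteq> 0\<^sub>v n"
  shows "v \<bullet> v > 0"
proof -
  have ge: "v \<bullet> v = (\<Sum>i<n. (v $ i)^2)"
    using assms by (simp add: scalar_prod_def power2_eq_square lessThan_atLeast0)
  obtain i where i: "i < n" "v $ i \<noteq> 0"
    using assms by (metis eq_vecI carrier_vecD index_zero_vec(1,2))
  have "0 < (v $ i)^2" using i by simp
  also have "\<dots> \<le> (\<Sum>i<n. (v $ i)^2)"
    by (rule member_le_sum) (use i in auto)
  finally show ?thesis using ge by simp
qed

lemma smult_mat_vec_mine: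
  fixes A :: "real mat"
  assumes "A \<in> carrier_mat n n" "v \<in> carrier_vec n"
  shows "(k \<cdot>\<^sub>m A) *\<^sub>v v = k \<cdot>\<^sub>v (A *\<^sub>v v)"
  using assms by (intro eq_vecI) (auto simp: scalar_prod_def sum_distrib_left mult.assoc)

lemma posdef_det_nz:
  fixes A :: "real mat"
  assumes A: "A \<in> carrier_mat n n"
    and pd: "\<forall>v \<in> carrier_vec n. v \<noteq> 0\<^sub>v n \<longrightarrow> v \<bullet> (A *\<^sub>v v) > 0"
  shows "det A \<noteq> 0"
proof
  assume "det A = 0"
  then obtain v where v: "v \<in> carrier_vec n" "v \<noteq> 0\<^sub>v n" "A *\<^sub>v v = 0\<^sub>v n"
    using det_0_iff_vec_prod_zero[OF A] by blast
  have "v \<bullet> (A *\<^sub>v v) = 0" using v by simp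
  with pd v show False by auto
qed

lemma posdef_det_pos:
  fixes A :: "real mat"
  assumes A: "A \<in> carrier_mat n n"
    and pd: "\<forall>v \<in> carrier_vec n. v \<noteq> 0\<^sub>v n \<longrightarrow> v \<bullet> (A *\<^sub>v v) > 0"
  shows "det A > 0"
proof (rule ccontr)
  assume neg: "\<not> det A > 0"
  define B where "B t = t \<cdot>\<^sub>m 1\<^sub>m n + (1 - t) \<cdot>\<^sub>m A" for t :: real
  have Bc: "B t \<in> carrier_mat n n" for t using A by (simp add: B_def)
  define f where "f t = det (B t)" for t
  have fdef: "f t = (\<Sum> p \<in> {p. p permutes {0 ..< n}}.
     signof p * (\<Prod> i = 0 ..< n. t * (1\<^sub>m n) $$ (i, p i) + (1 - t) * A $$ (i, p i)))" for t
  proof -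
    have "f t = (\<Sum> p \<in> {p. p permutes {0 ..< n}}. signof p * (\<Prod> i = 0 ..< n. B t $$ (i, p i)))"
      unfolding f_def by (rule det_def'[OF Bc])
    also have "\<dots> = (\<Sum> p \<in> {p. p permutes {0 ..< n}}.
     signof p * (\<Prod> i = 0 ..< n. t * (1\<^sub>m n) $$ (i, p i) + (1 - t) * A $$ (i, p i)))"
    proof (intro sum.cong refl arg_cong2[where f="(*)"] prod.cong)
      fix p i assume p: "p \<in> {p. p permutes {0 ..< n}}" and i: "i \<in> {0..<n}"
      have "p i < n" using p i by (auto dest: permutes_in_image)
      then show "B t $$ (i, p i) = t * (1\<^sub>m n) $$ (i, p i) + (1 - t) * A $$ (i, p i)"
        using i A by (simp add: B_def)
    qed
    finally show ?thesis .
  qed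
  have cont: "continuous_on {0..1} f"
    unfolding fdef by (intro continuous_intros)
  have "B 1 = 1\<^sub>m n" unfolding B_def using A by (intro eq_matI) auto
  then have f1: "f 1 = 1" unfolding f_def by simp
  have "B 0 = A" unfolding B_def using A by (intro eq_matI) auto
  then have f0: "f 0 = det A" unfolding f_def by simp
  have "f 0 \<le> 0" using neg f0 by simp
  then obtain t where t: "0 \<le> t" "t \<le> 1" "f t = 0"
    using IVT'[of f 0 0 1] cont f1 by auto
  have "\<forall>v \<in> carrier_vec n. v \<noteq> 0\<^sub>v n \<longrightarrow> v \<bullet> (B t *\<^sub>v v) > 0"
  proof (intro ballI impI)
    fix v :: "real vec" assume v: "v \<in> carrier_vec n" "v \<noteq> 0\<^sub>v n"
    have "B t *\<^sub>v v = t \<cdot>\<^sub>v v + (1 - t) \<cdot>\<^sub>v (A *\<^sub>v v)"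
      using A v unfolding B_def
      by (simp add: add_mult_distrib_mat_vec[of _ n n] smult_mat_vec_mine[of _ n])
    then have "v \<bullet> (B t *\<^sub>v v) = t * (v \<bullet> v) + (1 - t) * (v \<bullet> (A *\<^sub>v v))"
      using A v by (simp add: scalar_prod_add_distrib[of _ n])
    moreover have "v \<bullet> v > 0" by (rule self_sp_pos[OF v])
    moreover have "v \<bullet> (A *\<^sub>v v) > 0" using pd v by auto
    ultimately show "v \<bullet> (B t *\<^sub>v v) > 0" using t
      by (cases "t = 0") (auto intro: add_pos_nonneg add_nonneg_pos)
  qed
  then have "f t \<noteq> 0" unfolding f_def by (rule posdef_det_nz[OF Bc])
  with t show False by simp
qed

lemma trace_bound:
  fixes L T :: "real mat"
  assumes L: "L \<in> carrier_mat d d" and T: "T \<in> carrier_mat d d"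
    and B: "\<forall>i<d. \<forall>j<d. \<bar>L $$ (i,j)\<bar> \<le> B"
  shows "\<bar>mtrace (L * T)\<bar> \<le> (\<Sum>i<d. \<Sum>j<d. B * \<bar>T $$ (j,i)\<bar>)"
proof -
  have "mtrace (L * T) = (\<Sum>i<d. \<Sum>j<d. L $$ (i,j) * T $$ (j,i))"
    using L T unfolding mtrace_def
    by (auto simp: scalar_prod_def lessThan_atLeast0 intro!: sum.cong)
  also have "\<bar>\<dots>\<bar> \<le> (\<Sum>i<d. \<bar>\<Sum>j<d. L $$ (i,j) * T $$ (j,i)\<bar>)" by (rule sum_abs)
  also have "\<dots> \<le> (\<Sum>i<d. \<Sum>j<d. \<bar>L $$ (i,j) * T $$ (j,i)\<bar>)"
    by (intro sum_mono sum_abs)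
  also have "\<dots> \<le> (\<Sum>i<d. \<Sum>j<d. B * \<bar>T $$ (j,i)\<bar>)"
    using B by (intro sum_mono) (auto simp: abs_mult intro: mult_right_mono)
  finally show ?thesis .
qed

theorem lemma5:
  fixes m n N :: nat and Sig :: "nat \<Rightarrow> real mat"
    and Lam Th :: "nat \<Rightarrow> real mat"
  assumes "m \<ge> 1" and "n \<ge> 1" and "N > 2 * n"
    and "\<forall>i\<le>n. Sig i \<in> carrier_mat m m"
    and "\<forall>k. (Lam k, Th k) \<in> Lplus m n N"
    and "\<exists>B. \<forall>k. (\<forall>i<m*(n+1). \<forall>j<m*(n+1). \<bar>Lam k $$ (i,j)\<bar> \<le> B) \<and>
                 (\<forall>i<m*N. \<forall>j<m*N. \<bar>Th k $$ (i,j)\<bar> \<le> B)"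
    and "M \<in> carrier_mat (m*N) (m*N)" and "det M = 0"
    and "\<forall>i<m*N. \<forall>j<m*N. (\<lambda>k. Aop m n N (Lam k) (Th k) $$ (i,j)) \<longlonglongrightarrow> M $$ (i,j)"
  shows "filterlim (\<lambda>k. Jfun m n N Sig (Lam k) (Th k)) at_top sequentially"
proof -
  define A where "A k = Aop m n N (Lam k) (Th k)" for k
  define d where "d = m * (n+1)"
  define T where "T = Tmat m n Sig"
  obtain B where B: "\<And>k. \<forall>i<d. \<forall>j<d. \<bar>Lam k $$ (i,j)\<bar> \<le> B"
    using assms(6) unfolding d_def by blast
  have LP: "Lam k \<in> Sym m (n+1)" "Th k \<in> Sym m N" "pos_def (A k)" for k
    using assms(5) unfolding Lplus_def kerA_perp_def A_def by auto
  have Lc: "Lam k \<in> carrier_mat d d" for k using LP(1)[of k] unfolding Sym_def d_def by auto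
  have Thc: "Th k \<in> carrier_mat (m*N) (m*N)" for k using LP(2)[of k] unfolding Sym_def by auto
  have Ac: "A k \<in> carrier_mat (m*N) (m*N)" for k
    using Thc[of k] LP(3)[of k] unfolding A_def Aop_def pos_def_def carrier_mat_def by auto
  have detpos: "det (A k) > 0" for k
    using posdef_det_pos[OF Ac[of k]] LP(3)[of k] Ac[of k] unfolding pos_def_def by auto
  have detlim: "(\<lambda>k. det (A k)) \<longlonglongrightarrow> 0"
  proof -
    have "(\<lambda>k. (\<Sum> p \<in> {p. p permutes {0 ..< m*N}}. signof p * (\<Prod> i = 0 ..< m*N. A k $$ (i, p i))))
       \<longlonglongrightarrow> (\<Sum> p \<in> {p. p permutes {0 ..< m*N}}. signof p * (\<Prod> i = 0 ..< m*N. M $$ (i, p i)))"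
    proof (intro tendsto_sum tendsto_mult tendsto_const tendsto_prod)
      fix p i assume p: "p \<in> {p. p permutes {0 ..< m*N}}" and i: "i \<in> {0..<m*N}"
      have "p i < m*N" using p i by (auto dest: permutes_in_image)
      then show "(\<lambda>k. A k $$ (i, p i)) \<longlonglongrightarrow> M $$ (i, p i)"
        using assms(9) i unfolding A_def by auto
    qed
    then show ?thesis using det_def'[OF Ac] det_def'[OF assms(7)] assms(8) by simp
  qed
  have "filterlim (\<lambda>k. det (A k)) (at_right 0) sequentially"
    using detlim detpos by (intro tendsto_imp_filterlim_at_right) auto
  then have "filterlim (\<lambda>k. ln (det (A k))) at_bot sequentially"
    by (rule filterlim_compose[OF ln_at_0])
  then have L1: "filterlim (\<lambda>k. - ln (det (A k))) at_top sequentially"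
    by (simp add: filterlim_uminus_at_top)
  define C where "C = (\<Sum>i<d. \<Sum>j<d. B * \<bar>T $$ (j,i)\<bar>)"
  have L2: "filterlim (\<lambda>k. - C + - ln (det (A k))) at_top sequentially"
    by (rule filterlim_tendsto_add_at_top[OF tendsto_const L1])
  have Tc: "T \<in> carrier_mat d d" unfolding T_def Tmat_def d_def by simp
  have "- C + - ln (det (A k)) \<le> Jfun m n N Sig (Lam k) (Th k)" for k
  proof -
    have "\<bar>mtrace (Lam k * T)\<bar> \<le> C"
      unfolding C_def by (rule trace_bound[OF Lc Tc B])
    then show ?thesis unfolding Jfun_def A_def T_def by linarith
  qed
  then show ?thesis
    by (intro filterlim_at_top_mono[OF L2]) auto
qed
end
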